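(* Let $m\ge 2$ be an integer and let $P=(A_1,A_2,\dots,A_{m+1})$ be a cyclic $(m+1)$-gon (distinct vertices on a circle) with vertices ordered anticlockwise. Then \[ S_{1,m,m+1}\prod_{i=2}^{m-1} x_{i,m+1} = \sum_{j=1}^{m-1} S_{j,j+1,m+1}\, \frac{\prod_{k=1}^{m} x_{k,m+1}}{x_{j,m+1}\,x_{j+1,m+1}}. \]
   Context: For points $A_p=(x_p,y_p)$, $x_{pq}:=(x_q-x_p)^2+(y_q-y_p)^2$ is the squared distance between $A_p$ and $A_q$, and $S_{pqr}:=2[(x_q-x_p)(y_r-y_p)-(y_q-y_p)(x_r-x_p)]$ is four times the signed area of the triangle $A_pA_qA_r$. An empty product equals $1$. *)

theory Defs
  imports Complex_Main
begin

definition sqd :: "(nat \<Rightarrow> real \<times> real) \<Rightarrow> nat \<Rightarrow> nat \<Rightarrow> real" where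
  "sqd A p q = (fst (A q) - fst (A p))^2 + (snd (A q) - snd (A p))^2"

(* S_{pqr}: four times the signed area of triangle A_p A_q A_r *)
definition sarea :: "(nat \<Rightarrow> real \<times> real) \<Rightarrow> nat \<Rightarrow> nat \<Rightarrow> nat \<Rightarrow> real" where
  "sarea A p q r = 2 * ((fst (A q) - fst (A p)) * (snd (A r) - snd (A p))
                       - (snd (A q) - snd (A p)) * (fst (A r) - fst (A p)))"

(* A_1, ..., A_n lie on a circle (centre c, radius r > 0) and are met in this
   order when traversing the circle anticlockwise exactly once: their polar
   angles can be chosen strictly increasing within one full turn. *)
definition cyclic_anticlockwise :: "(nat \<Rightarrow> real \<times> real) \<Rightarrow> nat \<Rightarrow> bool" where
  "cyclic_anticlockwise A n \<longleftrightarrow>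
     (\<exists>c r \<theta>. r > 0 \<and>
        (\<forall>i\<in>{1..n}. A i = (fst c + r * cos (\<theta> i), snd c + r * sin (\<theta> i))) \<and>
        (\<forall>i\<in>{1..<n}. \<theta> i < \<theta> (Suc i)) \<and>
        \<theta> n < \<theta> 1 + 2 * pi)"

end

theory Submission
  imports Defs
begin

lemma key_alg:
  fixes ax ay bx bq cx cy wx wy :: real
  assumes na: "ax^2+ay^2 + 2*(ax*wx+ay*wy) = 0"
    and nb: "bx^2+bq^2 + 2*(bx*wx+bq*wy) = 0"
    and nc: "cx^2+cy^2 + 2*(cx*wx+cy*wy) = 0"
    and a0: "ax^2+ay^2 \<noteq> 0" and b0: "bx^2+bq^2 \<noteq> 0" and c0: "cx^2+cy^2 \<noteq> 0"
  shows "2*(ax*bq-ay*bx)/((ax^2+ay^2)*(bx^2+bq^2)) + 2*(bx*cy-bq*cx)/((bx^2+bq^2)*(cx^2+cy^2))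
       = 2*(ax*cy-ay*cx)/((ax^2+ay^2)*(cx^2+cy^2))"
proof -
  have na': "ax^2+ay^2 = -2*(ax*wx+ay*wy)" using na by linarith
  have nb': "bx^2+bq^2 = -2*(bx*wx+bq*wy)" using nb by linarith
  have nc': "cx^2+cy^2 = -2*(cx*wx+cy*wy)" using nc by linarith
  have eq: "(ax*bq-ay*bx)*(cx^2+cy^2) + (bx*cy-bq*cx)*(ax^2+ay^2) = (ax*cy-ay*cx)*(bx^2+bq^2)"
    unfolding na' nb' nc' by algebra
  have g: "\<And>x y z NA NB NC::real. NA \<noteq> 0 \<Longrightarrow> NB \<noteq> 0 \<Longrightarrow> NC \<noteq> 0 \<Longrightarrow>
     x*NC + y*NA = z*NB \<Longrightarrow> 2*x/(NA*NB) + 2*y/(NB*NC) = 2*z/(NA*NC)"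
    by (simp add: field_simps) (metis mult.commute mult.left_commute distrib_left)
  show ?thesis using g[OF a0 b0 c0 eq] by simp
qed

theorem theorem2p9:
  fixes m :: nat and A :: "nat \<Rightarrow> real \<times> real"
  assumes "m \<ge> 2"
    and "inj_on A {1..m+1}"
    and "cyclic_anticlockwise A (m+1)"
  shows "sarea A 1 m (m+1) * (\<Prod>i=2..m-1. sqd A i (m+1))
       = (\<Sum>j=1..m-1. sarea A j (j+1) (m+1) *
            ((\<Prod>k=1..m. sqd A k (m+1)) / (sqd A j (m+1) * sqd A (j+1) (m+1))))"
proof -
  obtain c r \<theta> where r: "r > 0"
    and pts: "\<forall>i\<in>{1..m+1}. A i = (fst c + r * cos (\<theta> i), snd c + r * sin (\<theta> i))"
    using assms(3) unfolding cyclic_anticlockwise_def by blast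
  define P where "P = m+1"
  have circ: "(fst (A i) - fst c)^2 + (snd (A i) - snd c)^2 = r^2" if "i \<in> {1..m+1}" for i
  proof -
    have "(fst (A i) - fst c)^2 + (snd (A i) - snd c)^2 = (r * cos (\<theta> i))^2 + (r * sin (\<theta> i))^2"
      using pts that by simp
    also have "\<dots> = r^2 * ((sin (\<theta> i))^2 + (cos (\<theta> i))^2)"
      by (simp only: power_mult_distrib distrib_left add.commute)
    finally show ?thesis by simp
  qed
  define w1 where "w1 = fst (A P) - fst c"
  define w2 where "w2 = snd (A P) - snd c"
  have cirw: "(fst (A i) - fst (A P))^2 + (snd (A i) - snd (A P))^2
      + 2*((fst (A i) - fst (A P))*w1 + (snd (A i) - snd (A P))*w2) = 0"
    if "i \<in> {1..m+1}" for i
  proof -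
    have "P \<in> {1..m+1}" unfolding P_def by simp
    from circ[OF this] circ[OF that] show ?thesis unfolding w1_def w2_def
      by (simp add: power2_eq_square algebra_simps)
  qed
  have nz: "sqd A i P \<noteq> 0" if "i \<in> {1..m}" for i
  proof
    assume "sqd A i P = 0"
    hence "A P = A i" unfolding sqd_def by (simp add: prod_eq_iff sum_power2_eq_zero_iff)
    moreover have "i \<noteq> P" "i \<in> {1..m+1}" "P \<in> {1..m+1}" using that unfolding P_def by auto
    ultimately show False using assms(2) by (metis inj_on_def)
  qed
  define F where "F a b = sarea A a b P / (sqd A a P * sqd A b P)" for a b
  have F_add: "F a b + F b c' = F a c'" if "a \<in> {1..m}" "b \<in> {1..m}" "c' \<in> {1..m}" for a b c'
  proof -
    have s: "sarea A x y P = 2*((fst (A x) - fst (A P))*(snd (A y) - snd (A P))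
               - (snd (A x) - snd (A P))*(fst (A y) - fst (A P)))" for x y
      unfolding sarea_def by (simp add: algebra_simps)
    have q: "sqd A x P = (fst (A x) - fst (A P))^2 + (snd (A x) - snd (A P))^2" for x
      unfolding sqd_def by (simp add: power2_commute)
    show ?thesis unfolding F_def s q
      apply (rule key_alg[where wx=w1 and wy=w2])
      using cirw that nz[unfolded q] q by auto
  qed
  have tel: "(\<Sum>j=1..n-1. F j (j+1)) = F 1 n" if "1 \<le> n" "n \<le> m" for n
    using that
  proof (induction n rule: nat_induct_at_least)
    case base
    have "F 1 1 = 0" unfolding F_def sarea_def by simp
    then show ?case by simp
  next
    case (Suc n)
    have "(\<Sum>j=1..Suc n-1. F j (j+1)) = (\<Sum>j=1..n-1. F j (j+1)) + F n (n+1)"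
      using Suc.hyps by (cases n) auto
    also have "\<dots> = F 1 n + F n (n+1)" using Suc by simp
    also have "\<dots> = F 1 (Suc n)" using F_add[of 1 n "n+1"] Suc by simp
    finally show ?case .
  qed
  define Q where "Q = (\<Prod>k=1..m. sqd A k P)"
  have Qs: "Q = sqd A 1 P * sqd A m P * (\<Prod>i=2..m-1. sqd A i P)"
  proof -
    have "{1..m} = insert 1 (insert m {2..m-1})" using assms(1) by auto
    then show ?thesis unfolding Q_def using assms(1)
      by (simp add: algebra_simps)
  qed
  have "(\<Sum>j=1..m-1. sarea A j (j+1) P * (Q / (sqd A j P * sqd A (j+1) P)))
      = (\<Sum>j=1..m-1. Q * F j (j+1))"
    unfolding F_def by (simp add: algebra_simps)
  also have "\<dots> = Q * F 1 m" using tel[of m] assms(1) by (simp add: sum_distrib_left[symmetric])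
  also have "\<dots> = sarea A 1 m P * (\<Prod>i=2..m-1. sqd A i P)"
    unfolding Qs F_def using nz[of 1] nz[of m] assms(1) by (simp add: field_simps)
  finally show ?thesis unfolding Q_def P_def by simp
qed

end
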